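(* For every positive integer $t$ there exist positive integers $t'$ and $u$ such that every semilinear graph of complexity $t$ is semilinear* of complexity $(t',u)$.
   Context: A function $f:\mathbb{R}^{m}\to\mathbb{R}$ is linear if $f(\mathbf{x})=b+\sum_{i=1}^m a_i\mathbf{x}(i)$ for some reals $a_1,\dots,a_m,b$. A finite simple graph $G$ is semilinear of complexity $t$ if $V(G)\subset\mathbb{R}^d$ for some positive integer $d$, and there are $t$ linear functions $f_1,\dots,f_t:\mathbb{R}^d\times\mathbb{R}^d\to\mathbb{R}$ and a Boolean function $\phi:\{\mathrm{F},\mathrm{T}\}^{3t}\to\{\mathrm{F},\mathrm{T}\}$ such that for distinct $\mathbf{x},\mathbf{y}\in V(G)$, $\{\mathbf{x},\mathbf{y}\}$ is an edge iff $\phi\big(\{f_i(\mathbf{x},\mathbf{y})<0,\ f_i(\mathbf{x},\mathbf{y})\leq 0,\ f_i(\mathbf{x},\mathbf{y})=0\}_{i\in[t]}\big)=\mathrm{T}$ (assumed symmetric in $\mathbf{x},\mathbf{y}$). $G$ is semilinear* of complexity $(t,u)$ if $V(G)\subset\mathbb{R}^d$ and there are $tu$ linear functions $f_{i,j}:\mathbb{R}^d\times\mathbb{R}^d\to\mathbb{R}$, $(i,j)\in[u]\times[t]$, such that for distinct $\mathbf{x},\mathbf{y}\in V(G)$, $\{\mathbf{x},\mathbf{y}\}$ is an edge iff $\bigvee_{i\in[u]}\bigwedge_{j\in[t]}\{f_{i,j}(\mathbf{x},\mathbf{y})<0\}$ is true (assumed symmetric in $\mathbf{x},\mathbf{y}$).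 *)

theory Defs
  imports Main Complex_Main
begin

text \<open>Points of R^d are real lists of length d.  A linear function
  f : R^d x R^d -> R is given by a constant b and coefficient vectors a, c:
  f(x,y) = b + sum_{i<d} a_i x(i) + sum_{i<d} c_i y(i).\<close>

type_synonym linfun = "real \<times> (nat \<Rightarrow> real) \<times> (nat \<Rightarrow> real)"

definition lin_eval :: "nat \<Rightarrow> linfun \<Rightarrow> real list \<Rightarrow> real list \<Rightarrow> real" where
  "lin_eval d f x y =
     fst f + (\<Sum>i<d. fst (snd f) i * x ! i) + (\<Sum>i<d. snd (snd f) i * y ! i)"

definition simple_graph :: "'a set \<Rightarrow> ('a \<Rightarrow> 'a \<Rightarrow> bool) \<Rightarrow> bool" where
  "simple_graph V E \<longleftrightarrow> finite V \<and>
     (\<forall>x y. E x y \<longrightarrow> x \<in> V \<and> y \<in> V \<and> x \<noteq> y \<and> E y x)"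

definition sign_pattern :: "nat \<Rightarrow> nat \<Rightarrow> (nat \<Rightarrow> linfun) \<Rightarrow> real list \<Rightarrow> real list \<Rightarrow> bool list" where
  "sign_pattern d t f x y =
     concat (map (\<lambda>i. [lin_eval d (f i) x y < 0, lin_eval d (f i) x y \<le> 0, lin_eval d (f i) x y = 0]) [0..<t])"

definition semilinear :: "nat \<Rightarrow> real list set \<Rightarrow> (real list \<Rightarrow> real list \<Rightarrow> bool) \<Rightarrow> bool" where
  "semilinear t V E \<longleftrightarrow>
     (\<exists>d::nat. d > 0 \<and> (\<forall>x\<in>V. length x = d) \<and>
       (\<exists>(f :: nat \<Rightarrow> linfun) (\<phi> :: bool list \<Rightarrow> bool).
          \<forall>x\<in>V. \<forall>y\<in>V. x \<noteq> y \<longrightarrow> (E x y \<longleftrightarrow> \<phi> (sign_pattern d t f x y))))"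

definition semilinear_star :: "nat \<Rightarrow> nat \<Rightarrow> real list set \<Rightarrow> (real list \<Rightarrow> real list \<Rightarrow> bool) \<Rightarrow> bool" where
  "semilinear_star t u V E \<longleftrightarrow>
     (\<exists>d::nat. d > 0 \<and> (\<forall>x\<in>V. length x = d) \<and>
       (\<exists>f :: nat \<Rightarrow> nat \<Rightarrow> linfun.
          \<forall>x\<in>V. \<forall>y\<in>V. x \<noteq> y \<longrightarrow>
            (E x y \<longleftrightarrow> (\<exists>i<u. \<forall>j<t. lin_eval d (f i j) x y < 0))))"

end

theory Submission
  imports Defs
begin

definition code :: "real \<Rightarrow> nat" where
  "code v = (if v < 0 then 0 else if v = 0 then 1 else 2)"

definition lneg :: "linfun \<Rightarrow> linfun" where
  "lneg f = (- fst f, \<lambda>i. - fst (snd f) i, \<lambda>i. - snd (snd f) i)"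

definition lshift :: "real \<Rightarrow> linfun \<Rightarrow> linfun" where
  "lshift e f = (fst f - e, snd f)"

definition lconst :: "real \<Rightarrow> linfun" where
  "lconst c = (c, \<lambda>_. 0, \<lambda>_. 0)"

lemma lin_eval_lneg: "lin_eval d (lneg f) x y = - lin_eval d f x y"
  unfolding lin_eval_def lneg_def by (simp add: sum_negf)

lemma lin_eval_lshift: "lin_eval d (lshift e f) x y = lin_eval d f x y - e"
  unfolding lin_eval_def lshift_def by simp

lemma lin_eval_lconst: "lin_eval d (lconst c) x y = c"
  unfolding lin_eval_def lconst_def by simp

definition atom :: "real \<Rightarrow> linfun \<Rightarrow> nat \<Rightarrow> nat \<Rightarrow> linfun" where
  "atom e f c b = (if c = 0 then (if b = 0 then f else lconst (-1))
     else if c = 1 then (if b = 0 then lshift e f else lshift e (lneg f))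
     else (if b = 0 then lneg f else lconst (-1)))"

lemma atom_ok:
  assumes "c < 3" "e > 0" "lin_eval d f x y \<noteq> 0 \<Longrightarrow> e \<le> \<bar>lin_eval d f x y\<bar>"
  shows "(\<forall>b<2. lin_eval d (atom e f c b) x y < 0) \<longleftrightarrow> code (lin_eval d f x y) = c"
proof -
  have A: "(\<forall>b<2. P (b::nat)) \<longleftrightarrow> P 0 \<and> P 1" for P
    by (auto simp: numeral_2_eq_2 less_Suc_eq)
  consider "c = 0" | "c = 1" | "c = 2" using assms(1) by linarith
  then show ?thesis
    using assms(2,3)
    by cases (auto simp: A atom_def code_def lin_eval_lneg lin_eval_lshift lin_eval_lconst)
qed

definition pat :: "nat \<Rightarrow> nat list \<Rightarrow> bool list" where
  "pat t s = concat (map (\<lambda>k. [s ! k = 0, s ! k \<le> 1, s ! k = 1]) [0..<t])"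

lemma pat_sign:
  "pat t (map (\<lambda>k. code (lin_eval d (f k) x y)) [0..<t]) = sign_pattern d t f x y"
  unfolding pat_def sign_pattern_def
  by (intro arg_cong[where f=concat] map_cong) (auto simp: code_def)

lemma forall_2t:
  "(\<forall>j<2*t. P (j mod t) (j div t)) \<longleftrightarrow> (\<forall>k<t. \<forall>b<2. P k (b::nat))"
proof
  assume H: "\<forall>j<2*t. P (j mod t) (j div t)"
  show "\<forall>k<t. \<forall>b<2. P k b"
  proof (intro allI impI)
    fix k b :: nat assume k: "k < t" and b: "b < 2"
    have "b * t \<le> 1 * t" using b by (intro mult_right_mono) auto
    then have "b * t + k < 2 * t" using k by linarith
    with H have "P ((b*t+k) mod t) ((b*t+k) div t)" by blast
    moreover have "(b*t+k) mod t = k" "(b*t+k) div t = b" using k by auto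
    ultimately show "P k b" by simp
  qed
next
  assume H: "\<forall>k<t. \<forall>b<2. P k b"
  show "\<forall>j<2*t. P (j mod t) (j div t)"
  proof (intro allI impI)
    fix j assume j: "j < 2*t"
    then have "t > 0" by auto
    then have "j mod t < t" by simp
    moreover have "j div t < 2" using j by (simp add: div_less_iff_less_mult mult.commute)
    ultimately show "P (j mod t) (j div t)" using H by blast
  qed
qed

theorem lemma2p1:
  fixes t :: nat
  assumes "t > 0"
  shows "\<exists>t' u :: nat. t' > 0 \<and> u > 0 \<and>
           (\<forall>(V :: real list set) E. simple_graph V E \<and> semilinear t V E \<longrightarrow>
              semilinear_star t' u V E)"
proof (intro exI conjI allI impI)
  let ?L = "List.n_lists t [0,1,2::nat]"
  show "2 * t > 0" using assms by simp
  show "3 ^ t > (0::nat)" by simp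
  fix V :: "real list set" and E
  assume H: "simple_graph V E \<and> semilinear t V E"
  then have finV: "finite V" by (simp add: simple_graph_def)
  from H obtain d f \<phi> where d: "d > 0" "\<forall>x\<in>V. length x = d"
    and E: "\<forall>x\<in>V. \<forall>y\<in>V. x \<noteq> y \<longrightarrow> (E x y \<longleftrightarrow> \<phi> (sign_pattern d t f x y))"
    unfolding semilinear_def by blast
  define S where "S = (\<lambda>(k,x,y). \<bar>lin_eval d (f k) x y\<bar>) ` ({..<t} \<times> V \<times> V) - {0}"
  have finS: "finite S" unfolding S_def using finV by auto
  define e where "e = (if S = {} then 1 else Min S)"
  have epos: "e > 0"
  proof (cases "S = {}")
    case False
    have "\<forall>s\<in>S. s > 0" unfolding S_def by auto
    then show ?thesis using False finS by (simp add: e_def)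
  qed (simp add: e_def)
  have eprop: "e \<le> \<bar>lin_eval d (f k) x y\<bar>"
    if "k < t" "x \<in> V" "y \<in> V" "lin_eval d (f k) x y \<noteq> 0" for k x y
  proof -
    have "\<bar>lin_eval d (f k) x y\<bar> \<in> S" unfolding S_def using that by force
    then show ?thesis using finS by (auto simp: e_def)
  qed
  define g where "g = (\<lambda>i j. if \<phi> (pat t (?L ! i))
      then atom e (f (j mod t)) (?L ! i ! (j mod t)) (j div t) else lconst 1)"
  have lenL: "length ?L = 3 ^ t" by (simp add: length_n_lists numeral_3_eq_3)
  show "semilinear_star (2 * t) (3 ^ t) V E"
    unfolding semilinear_star_def
  proof (intro exI conjI ballI impI)
    show "d > 0" "\<And>x. x \<in> V \<Longrightarrow> length x = d" using d by auto
    fix x y assume x: "x \<in> V" and y: "y \<in> V" and xy: "x \<noteq> y"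
    define sv where "sv = map (\<lambda>k. code (lin_eval d (f k) x y)) [0..<t]"
    have conj: "(\<forall>j<2*t. lin_eval d (g i j) x y < 0) \<longleftrightarrow>
        \<phi> (pat t (?L ! i)) \<and> (\<forall>k<t. code (lin_eval d (f k) x y) = ?L ! i ! k)"
      if i: "i < 3 ^ t" for i
    proof (cases "\<phi> (pat t (?L ! i))")
      case True
      have mem: "?L ! i \<in> set ?L" using i lenL by simp
      then have len: "length (?L ! i) = t" and sub: "set (?L ! i) \<subseteq> {0,1,2}"
        by (auto simp: set_n_lists)
      have c3: "?L ! i ! k < 3" if "k < t" for k
      proof -
        have "?L ! i ! k \<in> set (?L ! i)" using that len by simp
        then show ?thesis using sub by auto
      qed
      have "(\<forall>j<2*t. lin_eval d (g i j) x y < 0) \<longleftrightarrow>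
          (\<forall>j<2*t. lin_eval d (atom e (f (j mod t)) (?L ! i ! (j mod t)) (j div t)) x y < 0)"
        using True by (simp add: g_def)
      also have "\<dots> \<longleftrightarrow> (\<forall>k<t. \<forall>b<2. lin_eval d (atom e (f k) (?L ! i ! k) b) x y < 0)"
        by (rule forall_2t)
      also have "\<dots> \<longleftrightarrow> (\<forall>k<t. code (lin_eval d (f k) x y) = ?L ! i ! k)"
        using atom_ok[OF c3 epos] eprop x y by blast
      finally show ?thesis using True by simp
    next
      case False
      have "0 < 2 * t" using assms by simp
      moreover have "\<not> lin_eval d (g i 0) x y < 0" using False by (simp add: g_def lin_eval_lconst)
      ultimately show ?thesis using False by blast
    qed
    have "E x y \<longleftrightarrow> \<phi> (pat t sv)"
      using E x y xy pat_sign sv_def by simp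
    also have "\<dots> \<longleftrightarrow> (\<exists>i<3^t. \<phi> (pat t (?L ! i)) \<and>
        (\<forall>k<t. code (lin_eval d (f k) x y) = ?L ! i ! k))"
    proof
      assume P: "\<phi> (pat t sv)"
      have "set sv \<subseteq> {0,1,2}" unfolding sv_def code_def by auto
      then have "sv \<in> set ?L" by (simp add: set_n_lists sv_def)
      then obtain i where "i < length ?L" "?L ! i = sv" by (metis in_set_conv_nth)
      then show "\<exists>i<3^t. \<phi> (pat t (?L ! i)) \<and> (\<forall>k<t. code (lin_eval d (f k) x y) = ?L ! i ! k)"
        using P lenL by (auto simp: sv_def)
    next
      assume "\<exists>i<3^t. \<phi> (pat t (?L ! i)) \<and> (\<forall>k<t. code (lin_eval d (f k) x y) = ?L ! i ! k)"
      then obtain i where i: "i < 3^t" "\<phi> (pat t (?L ! i))"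
        "\<forall>k<t. code (lin_eval d (f k) x y) = ?L ! i ! k" by blast
      have "?L ! i \<in> set ?L" using i lenL by simp
      then have len: "length (?L ! i) = t" by (simp add: set_n_lists)
      have "?L ! i = sv" using len i(3) by (intro nth_equalityI) (auto simp: sv_def)
      then show "\<phi> (pat t sv)" using i by simp
    qed
    also have "\<dots> \<longleftrightarrow> (\<exists>i<3^t. \<forall>j<2*t. lin_eval d (g i j) x y < 0)"
      using conj by blast
    finally show "E x y \<longleftrightarrow> (\<exists>i<3^t. \<forall>j<2*t. lin_eval d (g i j) x y < 0)" .
  qed
qed

end
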